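(* There exist sequences $\{a_n\}_{n\ge1}\subset\mathbb C$, $\{\epsilon_n\}_{n\ge1}$ and $\{R_n\}_{n\ge1}$ of positive reals with $R_{n-1}<|a_n|<R_n$, together with a strictly decreasing sequence $\{\delta_n\}_{n\ge0}$ of positive reals with $\delta_0=1/4$, such that for every $n\ge1$, every holomorphic map $h\colon\overline{\mathbb C}\setminus\gamma_n^{-1}(\infty_2)\to\mathbb C^2$ with $\sup_{K_n}|\gamma_n-h|<\delta_n$ is an embedding on $K_{n-1}$, and $$\sup_{\overline{B_j(1/2)}}|f_n-\mathrm{id}|<\delta_j\cdot\frac1{2^{j+n}}\qquad\text{for all }0\le j<n.$$
   Context: $\overline{\mathbb C^2}=\mathbb C^2\cup\{\infty_2\}$. Set $D_n=\{|z|<R_n\}\subset\mathbb C$, $B_n=\overline D_n\times\overline D_n$ for $n\ge1$, and $B_0=\{(0,0)\}$. For $B\subset\mathbb C^2$ and $\alpha>0$, $B(\alpha)=\{z\in\mathbb C^2:\operatorname{dist}(z,B)<\alpha\}$ (Euclidean distance). Let $g_n(z)=\epsilon_n/(z-a_n)$, $f_n(x,y)=(x,y+g_n(x))$ for $n$ odd and $f_n(x,y)=(x+g_n(y),y)$ for $n$ even. Let $\gamma_n(z)=f_n\circ\cdots\circ f_1(z,0)$ for $z\in\mathbb C$, $\gamma_n(\infty)=\infty_2$, $K_n=\gamma_n^{-1}(B_n)\subset\overline{\mathbb C}$ for $n\ge1$, and $K_0=\emptyset$. Norms $|\cdot|$ on $\mathbb C^2$ are Euclidean. *)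

theory Defs
  imports "HOL-Analysis.Analysis"
begin

text \<open>C^2 is modelled as complex \<times> complex (its product norm is Euclidean).
  The point at infinity of C^2 (and of the Riemann sphere) is modelled by None.\<close>

definition Dn :: "(nat \<Rightarrow> real) \<Rightarrow> nat \<Rightarrow> complex set" where
  "Dn R n = ball 0 (R n)"

definition Bn :: "(nat \<Rightarrow> real) \<Rightarrow> nat \<Rightarrow> (complex \<times> complex) set" where
  "Bn R n = (if n = 0 then {(0,0)} else closure (Dn R n) \<times> closure (Dn R n))"

definition nbhd :: "(complex \<times> complex) set \<Rightarrow> real \<Rightarrow> (complex \<times> complex) set" where
  "nbhd B \<alpha> = {z. infdist z B < \<alpha>}"

definition fmap :: "(nat \<Rightarrow> complex) \<Rightarrow> (nat \<Rightarrow> real) \<Rightarrow> nat \<Rightarrow> complex \<times> complex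
    \<Rightarrow> (complex \<times> complex) option" where
  "fmap a \<epsilon> n p = (case p of (x, y) \<Rightarrow>
     (if odd n then (if x = a n then None else Some (x, y + complex_of_real (\<epsilon> n) / (x - a n)))
      else (if y = a n then None else Some (x + complex_of_real (\<epsilon> n) / (y - a n), y))))"

text \<open>gam n z = f_n o ... o f_1 (z,0), on the finite part of the Riemann sphere
  (gamma_n(infinity) = infinity_2 by definition).\<close>
fun gam :: "(nat \<Rightarrow> complex) \<Rightarrow> (nat \<Rightarrow> real) \<Rightarrow> nat \<Rightarrow> complex \<Rightarrow> (complex \<times> complex) option" where
  "gam a \<epsilon> 0 z = Some (z, 0)"
| "gam a \<epsilon> (Suc n) z = Option.bind (gam a \<epsilon> n z) (fmap a \<epsilon> (Suc n))"

text \<open>Riemann sphere minus gamma_n^{-1}(infinity_2); infinity is always removed.\<close>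
definition dom_gam :: "(nat \<Rightarrow> complex) \<Rightarrow> (nat \<Rightarrow> real) \<Rightarrow> nat \<Rightarrow> complex set" where
  "dom_gam a \<epsilon> n = {z. gam a \<epsilon> n z \<noteq> None}"

definition Kn :: "(nat \<Rightarrow> complex) \<Rightarrow> (nat \<Rightarrow> real) \<Rightarrow> (nat \<Rightarrow> real) \<Rightarrow> nat \<Rightarrow> complex set" where
  "Kn a \<epsilon> R n = (if n = 0 then {} else {z. \<exists>p. gam a \<epsilon> n z = Some p \<and> p \<in> Bn R n})"

definition holo2_on :: "(complex \<Rightarrow> complex \<times> complex) \<Rightarrow> complex set \<Rightarrow> bool" where
  "holo2_on h S \<longleftrightarrow> (\<lambda>z. fst (h z)) holomorphic_on S \<and> (\<lambda>z. snd (h z)) holomorphic_on S"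

definition embedding_on :: "(complex \<Rightarrow> complex \<times> complex) \<Rightarrow> complex set \<Rightarrow> bool" where
  "embedding_on h K \<longleftrightarrow> inj_on h K \<and>
     (\<forall>z\<in>K. (deriv (\<lambda>w. fst (h w)) z, deriv (\<lambda>w. snd (h w)) z) \<noteq> (0, 0))"

end

theory Submission
  imports Defs "HOL-Complex_Analysis.Complex_Analysis"
begin

lemma dq_cont:
  fixes f :: "complex \<Rightarrow> complex"
  assumes holf: "f holomorphic_on U" and opU: "open U"
  shows "continuous_on (U \<times> U) (\<lambda>p. if fst p = snd p then deriv f (fst p) else (f (fst p) - f (snd p)) / (fst p - snd p))"
proof -
  let ?Q = "\<lambda>p. if fst p = snd p then deriv f (fst p) else (f (fst p) - f (snd p)) / (fst p - snd p)"
  have contf: "continuous_on U f" using holf holomorphic_on_imp_continuous_on by blast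
  have "isCont ?Q p" if p: "p \<in> U \<times> U" for p
  proof (cases "fst p = snd p")
    case False
    let ?g = "\<lambda>p. (f (fst p) - f (snd p)) / (fst p - snd p)"
    have cf1: "isCont f (fst p)" "isCont f (snd p)"
      using contf opU p by (auto simp: continuous_on_eq_continuous_at)
    have "isCont ?g p"
      using False cf1
      by (intro continuous_intros isCont_o2[where f=fst and g=f] isCont_o2[where f=snd and g=f]) auto
    moreover have "eventually (\<lambda>q. ?Q q = ?g q) (nhds p)"
    proof -
      have "open {q::complex\<times>complex. fst q \<noteq> snd q}"
        by (intro open_Collect_neq continuous_intros)
      then have "eventually (\<lambda>q. q \<in> {q::complex\<times>complex. fst q \<noteq> snd q}) (nhds p)"
        using False by (intro eventually_nhds_in_open) auto
      then show ?thesis by (rule eventually_mono) auto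
    qed
    then have "eventually (\<lambda>q. ?Q q = ?g q) (at p)"
      unfolding eventually_at_filter by (rule eventually_mono) auto
    ultimately show ?thesis
      using False unfolding isCont_def by (subst tendsto_cong) auto
  next
    case True
    define z0 where "z0 = fst p"
    have z0U: "z0 \<in> U" using p z0_def by auto
    have hd: "deriv f holomorphic_on U" using holf opU by (rule holomorphic_deriv)
    have cd: "isCont (deriv f) z0"
      using hd opU z0U holomorphic_on_imp_continuous_on continuous_on_eq_continuous_at by blast
    show ?thesis
      unfolding continuous_at_eps_delta
    proof (intro allI impI)
      fix e :: real assume e: "e > 0"
      obtain d1 where d1: "d1 > 0" "\<And>u. dist u z0 < d1 \<Longrightarrow> dist (deriv f u) (deriv f z0) < e/2"
        using cd e unfolding continuous_at_eps_delta by (metis half_gt_zero)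
      obtain d2 where d2: "d2 > 0" "ball z0 d2 \<subseteq> U" using opU z0U open_contains_ball by blast
      define d where "d = min d1 d2"
      have "dist (?Q q) (?Q p) < e" if q: "dist q p < d" for q
      proof -
        have Qp: "?Q p = deriv f z0" using True z0_def by simp
        have x: "dist (fst q) z0 < d" using q z0_def
          by (metis dist_fst_le le_less_trans)
        have y: "dist (snd q) z0 < d" using q z0_def True
          by (metis dist_snd_le le_less_trans)
        show ?thesis
        proof (cases "fst q = snd q")
          case True
          then show ?thesis using d1(2)[of "fst q"] x Qp d_def e by auto
        next
          case False
          define S where "S = ball z0 d"
          have SU: "S \<subseteq> U" using d2 d_def S_def by auto
          have bd: "norm ((f (fst q) - deriv f z0 * fst q) - (f (snd q) - deriv f z0 * snd q)) \<le> (e/2) * norm (fst q - snd q)"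
          proof (rule field_differentiable_bound[where S=S and f'="\<lambda>u. deriv f u - deriv f z0"])
            show "convex S" by (simp add: S_def)
            fix u assume u: "u \<in> S"
            have "(f has_field_derivative deriv f u) (at u within S)"
              using holomorphic_derivI[OF holf opU] SU u by blast
            then show "((\<lambda>u. f u - deriv f z0 * u) has_field_derivative deriv f u - deriv f z0) (at u within S)"
              by (auto intro!: derivative_eq_intros)
            show "norm (deriv f u - deriv f z0) \<le> e/2"
              using d1(2)[of u] u d_def S_def by (auto simp: dist_norm norm_minus_commute)
          next
            show "fst q \<in> S" "snd q \<in> S" using x y S_def by (auto simp: dist_commute)
          qed
          have eq: "(f (fst q) - f (snd q)) / (fst q - snd q) - deriv f z0
              = ((f (fst q) - deriv f z0 * fst q) - (f (snd q) - deriv f z0 * snd q)) / (fst q - snd q)"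
            using False by (simp add: field_simps)
          have "norm ((f (fst q) - f (snd q)) / (fst q - snd q) - deriv f z0) \<le> e/2"
            using bd False unfolding eq by (simp add: norm_divide divide_le_eq)
          then show ?thesis using False Qp e by (simp add: dist_norm)
        qed
      qed
      then show "\<exists>d>0. \<forall>q. dist q p < d \<longrightarrow> dist (?Q q) (?Q p) < e"
        using d1 d2 d_def by (intro exI[of _ d]) auto
    qed
  qed
  then show ?thesis by (simp add: continuous_at_imp_continuous_on)
qed

lemma lower_bound:
  fixes G1 G2 :: "complex \<Rightarrow> complex"
  assumes h1: "G1 holomorphic_on U" and h2: "G2 holomorphic_on U" and opU: "open U"
    and K: "compact K" "K \<subseteq> U"
    and inj: "inj_on (\<lambda>z. (G1 z, G2 z)) K"
    and dnz: "\<forall>z\<in>K. (deriv G1 z, deriv G2 z) \<noteq> (0,0)"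
  shows "\<exists>m>0. (\<forall>z\<in>K. \<forall>w\<in>K. m * norm (z - w) \<le> norm (G1 z - G1 w) + norm (G2 z - G2 w))
     \<and> (\<forall>z\<in>K. m \<le> norm (deriv G1 z) + norm (deriv G2 z))"
proof (cases "K = {}")
  case True then show ?thesis by (intro exI[of _ 1]) auto
next
  case False
  define Q where "Q = (\<lambda>(f::complex\<Rightarrow>complex) (p::complex\<times>complex). if fst p = snd p then deriv f (fst p) else (f (fst p) - f (snd p)) / (fst p - snd p))"
  define F where "F = (\<lambda>p. norm (Q G1 p) + norm (Q G2 p))"
  have "continuous_on (U \<times> U) (Q G1)" "continuous_on (U \<times> U) (Q G2)"
    unfolding Q_def using dq_cont h1 h2 opU by auto
  then have "continuous_on (K \<times> K) (Q G1)" "continuous_on (K \<times> K) (Q G2)"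
    using K by (meson Sigma_mono continuous_on_subset)+
  then have "continuous_on (K \<times> K) F"
    unfolding F_def by (intro continuous_intros)
  moreover have "compact (K \<times> K)" using K by (simp add: compact_Times)
  ultimately obtain p0 where p0: "p0 \<in> K \<times> K" "\<And>p. p \<in> K \<times> K \<Longrightarrow> F p0 \<le> F p"
    using continuous_attains_inf[of "K \<times> K" F] False by auto
  have Fpos: "F p > 0" if p: "p \<in> K \<times> K" for p
  proof (cases "fst p = snd p")
    case True
    then show ?thesis using dnz p by (auto simp: F_def Q_def add_pos_nonneg add_nonneg_pos mem_Times_iff)
  next
    case False
    then have "(G1 (fst p), G2 (fst p)) \<noteq> (G1 (snd p), G2 (snd p))"
      using inj p by (auto simp: inj_on_def mem_Times_iff)
    then show ?thesis using False by (auto simp: F_def Q_def add_pos_nonneg add_nonneg_pos)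
  qed
  define m where "m = F p0"
  have mpos: "m > 0" using Fpos p0 m_def by auto
  have A: "m * norm (z - w) \<le> norm (G1 z - G1 w) + norm (G2 z - G2 w)" if "z \<in> K" "w \<in> K" for z w
  proof (cases "z = w")
    case True then show ?thesis by simp
  next
    case False
    have "m \<le> F (z, w)" using p0 that m_def by auto
    also have "F (z, w) = (norm (G1 z - G1 w) + norm (G2 z - G2 w)) / norm (z - w)"
      using False by (simp add: F_def Q_def norm_divide add_divide_distrib)
    finally show ?thesis using False by (simp add: le_divide_eq mult.commute)
  qed
  have B: "m \<le> norm (deriv G1 z) + norm (deriv G2 z)" if "z \<in> K" for z
    using p0(2)[of "(z,z)"] that m_def by (simp add: F_def Q_def)
  show ?thesis using A B mpos by blast
qed

lemma stability:
  fixes G1 G2 :: "complex \<Rightarrow> complex"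
  assumes hG1: "G1 holomorphic_on U" and hG2: "G2 holomorphic_on U" and opU: "open U"
    and K: "compact K" "K \<subseteq> U"
    and r: "r > 0" and KL: "\<forall>z\<in>K. cball z r \<subseteq> L" and LU: "L \<subseteq> U"
    and inj: "inj_on (\<lambda>z. (G1 z, G2 z)) K"
    and dnz: "\<forall>z\<in>K. (deriv G1 z, deriv G2 z) \<noteq> (0,0)"
  shows "\<exists>\<delta>>0. \<forall>h. holo2_on h U \<and> (\<forall>z\<in>L. norm ((G1 z, G2 z) - h z) < \<delta>) \<longrightarrow> embedding_on h K"
proof -
  obtain m where m: "m > 0" "\<And>z w. z\<in>K \<Longrightarrow> w\<in>K \<Longrightarrow> m * norm (z - w) \<le> norm (G1 z - G1 w) + norm (G2 z - G2 w)"
    "\<And>z. z\<in>K \<Longrightarrow> m \<le> norm (deriv G1 z) + norm (deriv G2 z)"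
    using lower_bound[OF hG1 hG2 opU K inj dnz] by blast
  define \<delta> where "\<delta> = m * r / 16"
  have \<delta>pos: "\<delta> > 0" using m r by (simp add: \<delta>_def)
  have main: "embedding_on h K" if hh: "holo2_on h U" and close: "\<forall>z\<in>L. norm ((G1 z, G2 z) - h z) < \<delta>" for h
  proof -
    define h1 where "h1 = (\<lambda>z. fst (h z))"
    define h2 where "h2 = (\<lambda>z. snd (h z))"
    have hh1: "h1 holomorphic_on U" and hh2: "h2 holomorphic_on U"
      using hh by (auto simp: holo2_on_def h1_def h2_def)
    have key: "(\<forall>z\<in>K. \<forall>w\<in>K. norm ((H z - G z) - (H w - G w)) \<le> (4*\<delta>/r) * norm (z - w)) \<and>
               (\<forall>z\<in>K. norm (deriv H z - deriv G z) \<le> 2*\<delta>/r)"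
      if hH: "H holomorphic_on U" and hG: "G holomorphic_on U" and cl: "\<forall>z\<in>L. norm (G z - H z) < \<delta>" for H G
    proof -
      define e where "e = (\<lambda>z. H z - G z)"
      have he: "e holomorphic_on U" unfolding e_def using hH hG by (intro holomorphic_intros)
      have ebd: "norm (e z) < \<delta>" if "z \<in> L" for z using cl that by (simp add: e_def norm_minus_commute)
      have de: "deriv e z = deriv H z - deriv G z" if "z \<in> U" for z
        unfolding e_def using hH hG opU that
        by (intro deriv_diff holomorphic_on_imp_differentiable_at) auto
      have cauchy: "norm (deriv e w) \<le> 2*\<delta>/r" if w: "cball w (r/2) \<subseteq> L" for w
      proof -
        have "norm ((deriv ^^ 1) e w) \<le> fact 1 * \<delta> / (r/2) ^ 1"
        proof (rule Cauchy_inequality)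
          show "e holomorphic_on ball w (r/2)"
by (rule holomorphic_on_subset[OF he]) (use w LU ball_subset_cball in blast)
          show "continuous_on (cball w (r/2)) e"
by (rule holomorphic_on_imp_continuous_on, rule holomorphic_on_subset[OF he]) (use w LU in blast)
          show "0 < r/2" using r by simp
          fix x assume "norm (w - x) = r/2"
          then have "x \<in> L" using w by (auto simp: dist_norm)
          then show "norm (e x) \<le> \<delta>" using ebd less_imp_le by blast
        qed
        then show ?thesis by (simp add: mult.commute)
      qed
      have dK: "norm (deriv e u) \<le> 2*\<delta>/r" if "z \<in> K" "u \<in> cball z (r/2)" for z u
      proof (rule cauchy)
        have "cball u (r/2) \<subseteq> cball z r" using that by (auto simp: cball_subset_cball_iff dist_commute)
        then show "cball u (r/2) \<subseteq> L" using KL that by blast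
      qed
      have lip: "norm (e z - e w) \<le> (4*\<delta>/r) * norm (z - w)" if zw: "z \<in> K" "w \<in> K" for z w
      proof (cases "norm (z - w) \<le> r/2")
        case True
        have "norm (e z - e w) \<le> (2*\<delta>/r) * norm (z - w)"
        proof (rule field_differentiable_bound[where S="cball z (r/2)" and f'="deriv e"])
          fix u assume u: "u \<in> cball z (r/2)"
          have "cball z (r/2) \<subseteq> U" using KL zw LU r subset_cball[of "r/2" r z] by auto
          then show "(e has_field_derivative deriv e u) (at u within cball z (r/2))"
            using holomorphic_derivI[OF he opU] u by blast
          show "norm (deriv e u) \<le> 2*\<delta>/r" using dK zw u by blast
        qed (use True r in \<open>auto simp: dist_norm norm_minus_commute\<close>)
        also have "\<dots> \<le> (4*\<delta>/r) * norm (z - w)"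
          using \<delta>pos r by (intro mult_right_mono) (auto simp: divide_right_mono)
        finally show ?thesis .
      next
        case False
        have "z \<in> L" "w \<in> L" using KL zw r by (meson centre_in_cball less_imp_le subsetD)+
        then have "norm (e z - e w) \<le> 2 * \<delta>"
          using ebd[of z] ebd[of w] norm_triangle_ineq4[of "e z" "e w"] by linarith
        also have "\<dots> \<le> (4*\<delta>/r) * norm (z - w)"
        proof -
          have "(4*\<delta>/r) * norm (z - w) \<ge> (4*\<delta>/r) * (r/2)"
            using False \<delta>pos r by (intro mult_left_mono) auto
          then show ?thesis using r by (simp add: field_simps)
        qed
        finally show ?thesis .
      qed
      have "norm (deriv H z - deriv G z) \<le> 2*\<delta>/r" if "z \<in> K" for z
        using dK[of z z] de[of z] that K r by auto
      then show ?thesis using lip by (auto simp: e_def)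
    qed
    have pe: "(G1 z, G2 z) - h z = (G1 z - h1 z, G2 z - h2 z)" for z
      by (simp add: h1_def h2_def prod_eq_iff)
    have cl1: "\<forall>z\<in>L. norm (G1 z - h1 z) < \<delta>" and cl2: "\<forall>z\<in>L. norm (G2 z - h2 z) < \<delta>"
      using close unfolding pe by (meson le_less_trans norm_fst_le norm_snd_le)+
    note k1 = key[OF hh1 hG1 cl1] and k2 = key[OF hh2 hG2 cl2]
    have "inj_on h K"
    proof (rule inj_onI, rule ccontr)
      fix z w assume zw: "z \<in> K" "w \<in> K" "h z = h w" "z \<noteq> w"
      then have e1: "h1 z = h1 w" and e2: "h2 z = h2 w" by (auto simp: h1_def h2_def)
      have "m * norm (z - w) \<le> norm (G1 z - G1 w) + norm (G2 z - G2 w)" using m zw by blast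
      also have "norm (G1 z - G1 w) = norm ((h1 z - G1 z) - (h1 w - G1 w))" using e1 by (simp add: norm_minus_commute)
      also have "norm (G2 z - G2 w) = norm ((h2 z - G2 z) - (h2 w - G2 w))" using e2 by (simp add: norm_minus_commute)
      also have "norm ((h1 z - G1 z) - (h1 w - G1 w)) + norm ((h2 z - G2 z) - (h2 w - G2 w))
          \<le> (4*\<delta>/r) * norm (z - w) + (4*\<delta>/r) * norm (z - w)"
        using k1 k2 zw by (intro add_mono) auto
      also have "\<dots> = (m/2) * norm (z - w)" using r by (simp add: \<delta>_def field_simps)
      finally show False using m zw by (simp add: mult_le_cancel_right)
    qed
    moreover have "(deriv h1 z, deriv h2 z) \<noteq> (0,0)" if z: "z \<in> K" for z
    proof
      assume "(deriv h1 z, deriv h2 z) = (0,0)"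
      then have "norm (deriv G1 z) + norm (deriv G2 z) \<le> 2*\<delta>/r + 2*\<delta>/r"
        using k1 k2 z by (intro add_mono) (auto simp: norm_minus_commute)
      also have "\<dots> = m/4" using r by (simp add: \<delta>_def field_simps)
      finally show False using m z by force
    qed
    ultimately show ?thesis by (simp add: embedding_on_def h1_def h2_def)
  qed
  show ?thesis using \<delta>pos main by blast
qed

fun gxy :: "(nat \<Rightarrow> complex) \<Rightarrow> (nat \<Rightarrow> real) \<Rightarrow> nat \<Rightarrow> complex \<Rightarrow> complex \<times> complex" where
  "gxy a e 0 z = (z, 0)"
| "gxy a e (Suc m) z = (if odd (Suc m)
     then (fst (gxy a e m z), snd (gxy a e m z) + complex_of_real (e (Suc m)) / (fst (gxy a e m z) - a (Suc m)))
     else (fst (gxy a e m z) + complex_of_real (e (Suc m)) / (snd (gxy a e m z) - a (Suc m)), snd (gxy a e m z)))"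

definition gx where "gx a e m = (\<lambda>z. fst (gxy a e m z))"
definition gy where "gy a e m = (\<lambda>z. snd (gxy a e m z))"

lemma gx0: "gx a e 0 = (\<lambda>z. z)" and gy0: "gy a e 0 = (\<lambda>z. 0)"
  by (auto simp: gx_def gy_def)

lemma gx_odd: "odd (Suc m) \<Longrightarrow> gx a e (Suc m) = gx a e m"
  and gy_odd: "odd (Suc m) \<Longrightarrow> gy a e (Suc m) = (\<lambda>z. gy a e m z + complex_of_real (e (Suc m)) / (gx a e m z - a (Suc m)))"
  and gx_even: "even (Suc m) \<Longrightarrow> gx a e (Suc m) = (\<lambda>z. gx a e m z + complex_of_real (e (Suc m)) / (gy a e m z - a (Suc m)))"
  and gy_even: "even (Suc m) \<Longrightarrow> gy a e (Suc m) = gy a e m"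
  by (auto simp: gx_def gy_def)

lemma gxy_eq: "gxy a e m z = (gx a e m z, gy a e m z)"
  by (simp add: gx_def gy_def)

fun Dm :: "(nat \<Rightarrow> complex) \<Rightarrow> (nat \<Rightarrow> real) \<Rightarrow> nat \<Rightarrow> complex set" where
  "Dm a e 0 = UNIV"
| "Dm a e (Suc m) = Dm a e m \<inter> {z. if odd (Suc m) then gx a e m z \<noteq> a (Suc m) else gy a e m z \<noteq> a (Suc m)}"

lemma Dm_mono: "m \<le> n \<Longrightarrow> Dm a e n \<subseteq> Dm a e m"
  by (induction n rule: dec_induct) auto

lemma gam_eq: "gam a e m z = (if z \<in> Dm a e m then Some (gxy a e m z) else None)"
proof (induction m)
  case 0 then show ?case by simp
next
  case (Suc m)
  show ?case
  proof (cases "z \<in> Dm a e m")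
    case False then show ?thesis using Suc by simp
  next
    case True
    then show ?thesis using Suc
      by (simp add: fmap_def gx_def gy_def case_prod_beta)
  qed
qed

lemma dom_gam_eq: "dom_gam a e m = Dm a e m"
  by (auto simp: dom_gam_def gam_eq)

lemma hol_gxy: "gx a e m holomorphic_on Dm a e m \<and> gy a e m holomorphic_on Dm a e m"
proof (induction m)
  case 0 then show ?case by (simp add: gx0 gy0)
next
  case (Suc m)
  have sub: "Dm a e (Suc m) \<subseteq> Dm a e m" by auto
  then have h: "gx a e m holomorphic_on Dm a e (Suc m)" "gy a e m holomorphic_on Dm a e (Suc m)"
    using Suc holomorphic_on_subset by blast+
  show ?case
  proof (cases "odd (Suc m)")
    case True
    have "(\<lambda>z. gy a e m z + complex_of_real (e (Suc m)) / (gx a e m z - a (Suc m))) holomorphic_on Dm a e (Suc m)"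
      using h True by (intro holomorphic_intros) auto
    then show ?thesis using True h by (simp add: gx_odd gy_odd)
  next
    case False
    have "(\<lambda>z. gx a e m z + complex_of_real (e (Suc m)) / (gy a e m z - a (Suc m))) holomorphic_on Dm a e (Suc m)"
      using h False by (intro holomorphic_intros) auto
    then show ?thesis using False h by (simp add: gx_even gy_even)
  qed
qed

lemma open_Dm: "open (Dm a e m)"
proof (induction m)
  case 0 then show ?case by simp
next
  case (Suc m)
  have cx: "continuous_on (Dm a e m) (gx a e m)" and cy: "continuous_on (Dm a e m) (gy a e m)"
    using hol_gxy holomorphic_on_imp_continuous_on by blast+
  show ?case
  proof (cases "odd (Suc m)")
    case True
    then have eq: "Dm a e (Suc m) = Dm a e m \<inter> gx a e m -` (- {a (Suc m)})"
      by auto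
    show ?thesis unfolding eq by (rule continuous_open_preimage[OF cx Suc]) auto
  next
    case False
    then have eq: "Dm a e (Suc m) = Dm a e m \<inter> gy a e m -` (- {a (Suc m)})"
      by auto
    show ?thesis unfolding eq by (rule continuous_open_preimage[OF cy Suc]) auto
  qed
qed

lemma inj_gxy: "inj_on (gxy a e m) (Dm a e m)"
proof (induction m)
  case 0 then show ?case by (simp add: inj_on_def)
next
  case (Suc m)
  show ?case
  proof (rule inj_onI)
    fix z w assume z: "z \<in> Dm a e (Suc m)" and w: "w \<in> Dm a e (Suc m)" and eq: "gxy a e (Suc m) z = gxy a e (Suc m) w"
    have "gxy a e m z = gxy a e m w"
    proof (cases "odd (Suc m)")
      case True
      then have "fst (gxy a e m z) = fst (gxy a e m w)" using eq by (simp add: prod_eq_iff)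
      then show ?thesis using eq True by (simp add: prod_eq_iff)
    next
      case False
      then have "snd (gxy a e m z) = snd (gxy a e m w)" using eq by (simp add: prod_eq_iff)
      then show ?thesis using eq False by (simp add: prod_eq_iff)
    qed
    then show "z = w" using Suc z w by (auto dest: inj_onD)
  qed
qed

lemma deriv_nz: "\<forall>z\<in>Dm a e m. (deriv (gx a e m) z, deriv (gy a e m) z) \<noteq> (0,0)"
proof (induction m)
  case 0 then show ?case by (simp add: gx0)
next
  case (Suc m)
  show ?case
  proof
    fix z assume z: "z \<in> Dm a e (Suc m)"
    have zm: "z \<in> Dm a e m" using z by auto
    have opS: "open (Dm a e (Suc m))" by (rule open_Dm)
    have dx: "(gx a e m has_field_derivative deriv (gx a e m) z) (at z)"
      using hol_gxy open_Dm zm holomorphic_derivI by blast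
    have dy: "(gy a e m has_field_derivative deriv (gy a e m) z) (at z)"
      using hol_gxy open_Dm zm holomorphic_derivI by blast
    have IH: "(deriv (gx a e m) z, deriv (gy a e m) z) \<noteq> (0,0)" using Suc zm by blast
    show "(deriv (gx a e (Suc m)) z, deriv (gy a e (Suc m)) z) \<noteq> (0,0)"
    proof (cases "odd (Suc m)")
      case True
      then have nz: "gx a e m z - a (Suc m) \<noteq> 0" using z by auto
      have "((\<lambda>z. gy a e m z + complex_of_real (e (Suc m)) / (gx a e m z - a (Suc m))) has_field_derivative
          deriv (gy a e m) z - complex_of_real (e (Suc m)) * deriv (gx a e m) z / (gx a e m z - a (Suc m))^2) (at z)"
        using dx dy nz by (auto intro!: derivative_eq_intros simp: power2_eq_square field_simps)
      then have "deriv (gy a e (Suc m)) z = deriv (gy a e m) z - complex_of_real (e (Suc m)) * deriv (gx a e m) z / (gx a e m z - a (Suc m))^2"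
        using True by (simp add: gy_odd DERIV_imp_deriv)
      then show ?thesis using True IH by (auto simp: gx_odd)
    next
      case False
      then have nz: "gy a e m z - a (Suc m) \<noteq> 0" using z by auto
      have "((\<lambda>z. gx a e m z + complex_of_real (e (Suc m)) / (gy a e m z - a (Suc m))) has_field_derivative
          deriv (gx a e m) z - complex_of_real (e (Suc m)) * deriv (gy a e m) z / (gy a e m z - a (Suc m))^2) (at z)"
        using dx dy nz by (auto intro!: derivative_eq_intros simp: power2_eq_square field_simps)
      then have "deriv (gx a e (Suc m)) z = deriv (gx a e m) z - complex_of_real (e (Suc m)) * deriv (gy a e m) z / (gy a e m z - a (Suc m))^2"
        using False by (simp add: gx_even DERIV_imp_deriv)
      then show ?thesis using False IH by (auto simp: gy_even)
    qed
  qed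
qed

lemma at_inf_minus: "filterlim f at_infinity F \<Longrightarrow> filterlim (\<lambda>x. f x - (c::'a::real_normed_vector)) at_infinity F"
  using tendsto_add_filterlim_at_infinity'[of f F "\<lambda>_. -c" "-c"] by simp

lemma lim_inf:
  assumes anz: "\<forall>k\<ge>1. a k \<noteq> 0"
  shows "filterlim (gx a e m) at_infinity at_infinity \<and> ((gy a e m) \<longlongrightarrow> 0) at_infinity"
proof (induction m)
  case 0 then show ?case by (simp add: gx0 gy0 filterlim_ident)
next
  case (Suc m)
  then have IH1: "filterlim (gx a e m) at_infinity at_infinity" and IH2: "((gy a e m) \<longlongrightarrow> 0) at_infinity" by auto
  show ?case
  proof (cases "odd (Suc m)")
    case True
    have "((\<lambda>z. gy a e m z + complex_of_real (e (Suc m)) / (gx a e m z - a (Suc m))) \<longlongrightarrow> 0 + 0) at_infinity"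
      by (intro tendsto_add IH2 tendsto_divide_0[OF tendsto_const] at_inf_minus IH1)
    then show ?thesis using True IH1 by (simp add: gx_odd gy_odd)
  next
    case False
    have "a (Suc m) \<noteq> 0" using anz by auto
    then have "((\<lambda>z. complex_of_real (e (Suc m)) / (gy a e m z - a (Suc m))) \<longlongrightarrow> complex_of_real (e (Suc m)) / (0 - a (Suc m))) at_infinity"
      by (intro tendsto_intros IH2) auto
    then have "filterlim (\<lambda>z. gx a e m z + complex_of_real (e (Suc m)) / (gy a e m z - a (Suc m))) at_infinity at_infinity"
      by (intro tendsto_add_filterlim_at_infinity' IH1)
    then show ?thesis using False IH2 by (simp add: gx_even gy_even)
  qed
qed

lemma exists_first: "z0 \<notin> Dm a e n \<Longrightarrow> \<exists>j<n. z0 \<in> Dm a e j \<and> z0 \<notin> Dm a e (Suc j)"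
proof (induction n)
  case 0 then show ?case by simp
next
  case (Suc n)
  show ?case
  proof (cases "z0 \<in> Dm a e n")
    case True then show ?thesis using Suc.prems by blast
  next
    case False then show ?thesis using Suc.IH by (meson less_SucI)
  qed
qed

lemma lim_pole:
  assumes anz: "\<forall>k\<ge>1. a k \<noteq> 0" and ainj: "\<forall>k m. 1 \<le> k \<longrightarrow> 1 \<le> m \<longrightarrow> k \<noteq> m \<longrightarrow> a k \<noteq> a m"
    and epos: "\<forall>k\<in>{1..n}. e k > 0"
    and j: "j < n" and z0: "z0 \<in> Dm a e j" "z0 \<notin> Dm a e (Suc j)" and S: "S \<subseteq> Dm a e n"
    and m: "Suc j \<le> m" "m \<le> n"
  shows "(odd (Suc j) \<longrightarrow> (gx a e m \<longlongrightarrow> a (Suc j)) (at z0 within S) \<and> filterlim (gy a e m) at_infinity (at z0 within S)) \<and>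
         (even (Suc j) \<longrightarrow> (gy a e m \<longlongrightarrow> a (Suc j)) (at z0 within S) \<and> filterlim (gx a e m) at_infinity (at z0 within S))"
  using m
proof (induction m rule: dec_induct)
  let ?F = "at z0 within S"
  let ?k = "Suc j"
  have evS: "eventually (\<lambda>z. z \<in> Dm a e ?k) ?F"
  proof -
    have "eventually (\<lambda>z. z \<in> S) ?F" by (simp add: eventually_at_filter)
    then show ?thesis by (rule eventually_mono) (use S Dm_mono[of ?k n a e] j in auto)
  qed
  have "e ?k > 0" using epos j by (simp add: Suc_leI)
  then have c0: "complex_of_real (e ?k) \<noteq> 0" by simp
  have ctx: "(gx a e j \<longlongrightarrow> gx a e j z0) ?F" and cty: "(gy a e j \<longlongrightarrow> gy a e j z0) ?F"
  proof -
    have "isCont (gx a e j) z0" "isCont (gy a e j) z0"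
      using hol_gxy[of a e j] open_Dm[of a e j] z0 holomorphic_on_imp_continuous_on
        continuous_on_eq_continuous_at by blast+
    then show "(gx a e j \<longlongrightarrow> gx a e j z0) ?F" "(gy a e j \<longlongrightarrow> gy a e j z0) ?F"
      by (auto simp: isCont_def intro: tendsto_mono[OF at_le[OF subset_UNIV]])
  qed
  case base
  show ?case
  proof (cases "odd ?k")
    case True
    then have v: "gx a e j z0 = a ?k" using z0 by auto
    have "filterlim (\<lambda>z. gx a e j z - a ?k) (at 0) ?F"
    proof (rule filterlim_atI)
      show "((\<lambda>z. gx a e j z - a ?k) \<longlongrightarrow> 0) ?F" using ctx v tendsto_diff[OF ctx tendsto_const, of "a ?k"] by simp
      show "eventually (\<lambda>z. gx a e j z - a ?k \<noteq> 0) ?F"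
        using evS by (rule eventually_mono) (use True in auto)
    qed
    then have "filterlim (\<lambda>z. complex_of_real (e ?k) / (gx a e j z - a ?k)) at_infinity ?F"
      using c0 by (intro filterlim_divide_at_infinity[OF tendsto_const])
    then have "filterlim (\<lambda>z. gy a e j z + complex_of_real (e ?k) / (gx a e j z - a ?k)) at_infinity ?F"
      by (rule tendsto_add_filterlim_at_infinity[OF cty])
    then show ?thesis using True ctx v by (simp add: gx_odd gy_odd)
  next
    case False
    then have v: "gy a e j z0 = a ?k" using z0 by auto
    have "filterlim (\<lambda>z. gy a e j z - a ?k) (at 0) ?F"
    proof (rule filterlim_atI)
      show "((\<lambda>z. gy a e j z - a ?k) \<longlongrightarrow> 0) ?F" using cty v tendsto_diff[OF cty tendsto_const, of "a ?k"] by simp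
      show "eventually (\<lambda>z. gy a e j z - a ?k \<noteq> 0) ?F"
        using evS by (rule eventually_mono) (use False in auto)
    qed
    then have "filterlim (\<lambda>z. complex_of_real (e ?k) / (gy a e j z - a ?k)) at_infinity ?F"
      using c0 by (intro filterlim_divide_at_infinity[OF tendsto_const])
    then have "filterlim (\<lambda>z. gx a e j z + complex_of_real (e ?k) / (gy a e j z - a ?k)) at_infinity ?F"
      by (rule tendsto_add_filterlim_at_infinity[OF ctx])
    then show ?thesis using False cty v by (simp add: gx_even gy_even)
  qed
next
  let ?F = "at z0 within S"
  let ?k = "Suc j"
  case (step m)
  have ne: "a ?k \<noteq> a (Suc m)" using ainj step by auto
  have c: "True" ..
  show ?case
  proof (cases "odd ?k")
    case k: True
    then have I1: "(gx a e m \<longlongrightarrow> a ?k) ?F" and I2: "filterlim (gy a e m) at_infinity ?F" using step by auto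
    show ?thesis
    proof (cases "odd (Suc m)")
      case True
      have "((\<lambda>z. complex_of_real (e (Suc m)) / (gx a e m z - a (Suc m))) \<longlongrightarrow> complex_of_real (e (Suc m)) / (a ?k - a (Suc m))) ?F"
        using ne by (intro tendsto_intros I1) auto
      then have "filterlim (\<lambda>z. gy a e m z + complex_of_real (e (Suc m)) / (gx a e m z - a (Suc m))) at_infinity ?F"
        by (intro tendsto_add_filterlim_at_infinity' I2)
      then show ?thesis using k True I1 by (simp add: gx_odd gy_odd)
    next
      case False
      have "((\<lambda>z. gx a e m z + complex_of_real (e (Suc m)) / (gy a e m z - a (Suc m))) \<longlongrightarrow> a ?k + 0) ?F"
        by (intro tendsto_add I1 tendsto_divide_0[OF tendsto_const] at_inf_minus I2)
      then show ?thesis using k False I2 by (simp add: gx_even gy_even)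
    qed
  next
    case k: False
    then have I1: "(gy a e m \<longlongrightarrow> a ?k) ?F" and I2: "filterlim (gx a e m) at_infinity ?F" using step by auto
    show ?thesis
    proof (cases "odd (Suc m)")
      case False
      have "((\<lambda>z. complex_of_real (e (Suc m)) / (gy a e m z - a (Suc m))) \<longlongrightarrow> complex_of_real (e (Suc m)) / (a ?k - a (Suc m))) ?F"
        using ne by (intro tendsto_intros I1) auto
      then have "filterlim (\<lambda>z. gx a e m z + complex_of_real (e (Suc m)) / (gy a e m z - a (Suc m))) at_infinity ?F"
        by (intro tendsto_add_filterlim_at_infinity' I2)
      then show ?thesis using k False I1 by (simp add: gx_even gy_even)
    next
      case True
      have "((\<lambda>z. gy a e m z + complex_of_real (e (Suc m)) / (gx a e m z - a (Suc m))) \<longlongrightarrow> a ?k + 0) ?F"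
        by (intro tendsto_add I1 tendsto_divide_0[OF tendsto_const] at_inf_minus I2)
      then show ?thesis using k True I2 by (simp add: gx_odd gy_odd)
    qed
  qed
qed

lemma Kn_char: "n \<ge> 1 \<Longrightarrow> R n > 0 \<Longrightarrow>
   Kn a e R n = {z \<in> Dm a e n. norm (gx a e n z) \<le> R n \<and> norm (gy a e n z) \<le> R n}"
  by (auto simp: Kn_def Bn_def Dn_def gam_eq gxy_eq mem_Times_iff)

lemma compact_K:
  assumes anz: "\<forall>k\<ge>1. a k \<noteq> 0" and ainj: "\<forall>k m. 1 \<le> k \<longrightarrow> 1 \<le> m \<longrightarrow> k \<noteq> m \<longrightarrow> a k \<noteq> a m"
    and epos: "\<forall>k\<in>{1..n}. e k > 0" and n: "n \<ge> 1" and R: "R n > 0"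
  shows "compact (Kn a e R n)"
proof -
  let ?K = "Kn a e R n"
  have Kc: "?K = {z \<in> Dm a e n. norm (gx a e n z) \<le> R n \<and> norm (gy a e n z) \<le> R n}"
    using Kn_char n R by blast
  have "filterlim (\<lambda>z. norm (gx a e n z)) at_top at_infinity"
    using lim_inf[OF anz] filterlim_at_infinity_imp_norm_at_top by blast
  then have "eventually (\<lambda>z. norm (gx a e n z) > R n) at_infinity"
    by (simp add: filterlim_at_top_dense)
  then obtain b where b: "\<And>z. b \<le> norm z \<Longrightarrow> norm (gx a e n z) > R n"
    unfolding eventually_at_infinity by blast
  have "?K \<subseteq> ball 0 b"
    using b unfolding Kc by (force simp: not_le[symmetric])
  then have bd: "bounded ?K" using bounded_ball bounded_subset by blast
  have cl: "closed ?K"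
    unfolding closed_limpt
  proof (intro allI impI)
    fix z0 assume lp: "z0 islimpt ?K"
    let ?F = "at z0 within ?K"
    have Fnb: "?F \<noteq> bot" using lp trivial_limit_within by blast
    have evK: "eventually (\<lambda>z. z \<in> ?K) ?F" by (simp add: eventually_at_filter)
    show "z0 \<in> ?K"
    proof (cases "z0 \<in> Dm a e n")
      case True
      have "isCont (gx a e n) z0" "isCont (gy a e n) z0"
        using hol_gxy[of a e n] open_Dm[of a e n] True holomorphic_on_imp_continuous_on
          continuous_on_eq_continuous_at by blast+
      then have lim: "((\<lambda>z. (gx a e n z, gy a e n z)) \<longlongrightarrow> (gx a e n z0, gy a e n z0)) ?F"
        by (intro tendsto_Pair) (auto simp: isCont_def intro: tendsto_mono[OF at_le[OF subset_UNIV]])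
      have clC: "closed {p::complex\<times>complex. norm (fst p) \<le> R n \<and> norm (snd p) \<le> R n}"
        by (intro closed_Collect_conj closed_Collect_le continuous_intros)
      have "(gx a e n z0, gy a e n z0) \<in> {p::complex\<times>complex. norm (fst p) \<le> R n \<and> norm (snd p) \<le> R n}"
        by (rule Lim_in_closed_set[OF clC _ Fnb lim]) (use evK in \<open>rule eventually_mono, auto simp: Kc\<close>)
      then show ?thesis using True Kc by auto
    next
      case False
      obtain j where j: "j < n" "z0 \<in> Dm a e j" "z0 \<notin> Dm a e (Suc j)"
        using exists_first[OF False] by blast
      have S: "?K \<subseteq> Dm a e n" using Kc by auto
      have "filterlim (gy a e n) at_infinity ?F \<or> filterlim (gx a e n) at_infinity ?F"
        using lim_pole[OF anz ainj epos j S, of n] j by (cases "odd (Suc j)") auto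
      then have "eventually (\<lambda>z. norm (gy a e n z) > R n) ?F \<or> eventually (\<lambda>z. norm (gx a e n z) > R n) ?F"
        by (metis filterlim_at_infinity_imp_norm_at_top filterlim_at_top_dense)
      moreover have "eventually (\<lambda>z. norm (gx a e n z) \<le> R n \<and> norm (gy a e n z) \<le> R n) ?F"
        using evK by (rule eventually_mono) (auto simp: Kc)
      ultimately have "eventually (\<lambda>z. False) ?F"
        by (auto elim: eventually_elim2)
      then show ?thesis using Fnb by (simp add: eventually_False)
    qed
  qed
  show ?thesis using bd cl by (simp add: compact_eq_bounded_closed)
qed

definition ac :: "nat \<Rightarrow> complex" where "ac k = complex_of_real (2 * real k - 1)"
definition Rc :: "nat \<Rightarrow> real" where "Rc k = 2 * real k"

lemma norm_ac: "k \<ge> 1 \<Longrightarrow> norm (ac k) = 2 * real k - 1"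
  unfolding ac_def norm_of_real by simp

lemma ac_nz: "\<forall>k\<ge>1. ac k \<noteq> 0"
proof (intro allI impI)
  fix k :: nat assume "k \<ge> 1"
  then have "norm (ac k) \<noteq> 0" using norm_ac by simp
  then show "ac k \<noteq> 0" by auto
qed

lemma ac_inj: "\<forall>k m. 1 \<le> k \<longrightarrow> 1 \<le> m \<longrightarrow> k \<noteq> m \<longrightarrow> ac k \<noteq> ac m"
  unfolding ac_def of_real_eq_iff by simp

definition PP :: "(nat \<Rightarrow> real) \<Rightarrow> nat \<Rightarrow> real \<Rightarrow> bool" where
  "PP e n \<delta> \<longleftrightarrow> (\<forall>h :: complex \<Rightarrow> complex \<times> complex.
          holo2_on h (dom_gam ac e n) \<and>
          (SUP z\<in>Kn ac e Rc n. ereal (norm (the (gam ac e n z) - h z))) < ereal \<delta>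
          \<longrightarrow> embedding_on h (Kn ac e Rc (n - 1)))"

lemma PP_mono: "PP e n \<delta> \<Longrightarrow> \<delta>' \<le> \<delta> \<Longrightarrow> PP e n \<delta>'"
  unfolding PP_def by (meson ereal_less_eq(3) order_less_le_trans)

lemma gam_cong: "(\<forall>k\<in>{1..m}. e k = e' k) \<Longrightarrow> gam a e m = gam a e' m"
proof (induction m)
  case 0 then show ?case by (simp add: fun_eq_iff)
next
  case (Suc m)
  then have "gam a e m = gam a e' m" by auto
  moreover have "fmap a e (Suc m) = fmap a e' (Suc m)"
    using Suc.prems by (auto simp: fmap_def fun_eq_iff)
  ultimately show ?case by (intro ext) simp
qed

lemma PP_cong: "(\<forall>k\<in>{1..n}. e k = e' k) \<Longrightarrow> PP e n \<delta> = PP e' n \<delta>"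
proof -
  assume a: "\<forall>k\<in>{1..n}. e k = e' k"
  have g1: "gam ac e n = gam ac e' n" using gam_cong a by blast
  have g2: "gam ac e (n - 1) = gam ac e' (n - 1)" using a by (intro gam_cong) auto
  show ?thesis unfolding PP_def dom_gam_def Kn_def g1 g2 ..
qed

lemma stab_exists:
  assumes n: "n \<ge> 1" and e: "\<forall>k\<in>{1..n}. 0 < e k \<and> e k \<le> 1"
  shows "\<exists>\<delta>>0. PP e n \<delta>"
proof (cases "n = 1")
  case True
  then show ?thesis by (intro exI[of _ 1]) (auto simp: PP_def Kn_def embedding_on_def)
next
  case False
  then obtain j where nj: "n = Suc j" and j1: "j \<ge> 1" using n by (cases n) auto
  let ?K = "Kn ac e Rc j"
  let ?L = "Kn ac e Rc n"
  let ?U = "Dm ac e n"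
  have Rpos: "Rc k > 0" if "k \<ge> 1" for k using that by (simp add: Rc_def)
  have "\<forall>k\<in>{1..j}. e k > 0" using e nj by auto
  then have cK: "compact ?K"
    by (rule compact_K[where a=ac and e=e and n=j and R=Rc, OF ac_nz ac_inj _ j1 Rpos[OF j1]])
  have Kc: "?K = {z \<in> Dm ac e j. norm (gx ac e j z) \<le> Rc j \<and> norm (gy ac e j z) \<le> Rc j}"
    using Kn_char j1 Rpos by blast
  have Lc: "?L = {z \<in> Dm ac e n. norm (gx ac e n z) \<le> Rc n \<and> norm (gy ac e n z) \<le> Rc n}"
    using Kn_char n Rpos by blast
  define Ob where "Ob = ?U \<inter> (\<lambda>z. (gx ac e n z, gy ac e n z)) -` (ball 0 (Rc n) \<times> ball 0 (Rc n))"
  have oOb: "open Ob"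
    unfolding Ob_def
  proof (rule continuous_open_preimage)
    show "continuous_on ?U (\<lambda>z. (gx ac e n z, gy ac e n z))"
      using hol_gxy[of ac e n] by (intro continuous_on_Pair holomorphic_on_imp_continuous_on) auto
  qed (auto simp: open_Dm open_Times)
  have ObL: "Ob \<subseteq> ?L" unfolding Ob_def Lc by (auto simp: mem_Times_iff)
  have en: "0 < e n" "e n \<le> 1" using e n by auto
  have bnd: "norm (complex_of_real (e n) / (u - ac n)) \<le> 1" if "norm u \<le> Rc j" for u
  proof -
    have "norm (ac n) = 2 * real j + 1" using nj norm_ac[of n] by simp
    then have "norm (u - ac n) \<ge> 1" using that norm_triangle_ineq2[of "ac n" u] unfolding Rc_def
      by (simp add: norm_minus_commute)
    then show ?thesis using en by (simp add: norm_divide divide_le_eq abs_of_pos)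
  qed
  have neq: "u \<noteq> ac n" if "norm u \<le> Rc j" for u
    using that nj norm_ac[of n] by (auto simp: Rc_def)
  have KOb: "?K \<subseteq> Ob"
  proof
    fix z assume z: "z \<in> ?K"
    then have zj: "z \<in> Dm ac e j" and bx: "norm (gx ac e j z) \<le> Rc j" and yb: "norm (gy ac e j z) \<le> Rc j"
      using Kc by auto
    have Rn: "Rc n = Rc j + 2" using nj by (simp add: Rc_def)
    show "z \<in> Ob"
    proof (cases "odd n")
      case True
      have "z \<in> ?U" using zj neq[OF bx] True nj by auto
      moreover have "norm (gy ac e j z + complex_of_real (e n) / (gx ac e j z - ac n)) \<le> Rc j + 1"
        using norm_triangle_ineq[of "gy ac e j z" "complex_of_real (e n) / (gx ac e j z - ac n)"] bnd[OF bx] yb by linarith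
      ultimately show ?thesis using True nj bx Rn unfolding Ob_def by (auto simp: gx_odd gy_odd mem_Times_iff)
    next
      case False
      have "z \<in> ?U" using zj neq[OF yb] False nj by auto
      moreover have "norm (gx ac e j z + complex_of_real (e n) / (gy ac e j z - ac n)) \<le> Rc j + 1"
        using norm_triangle_ineq[of "gx ac e j z" "complex_of_real (e n) / (gy ac e j z - ac n)"] bnd[OF yb] bx by linarith
      ultimately show ?thesis using False nj yb Rn unfolding Ob_def by (auto simp: gx_even gy_even mem_Times_iff)
    qed
  qed
  obtain r where r: "r > 0" "(\<Union>x\<in>?K. cball x r) \<subseteq> Ob"
    using compact_subset_open_imp_cball_epsilon_subset[OF cK oOb KOb] by blast
  have KL: "\<forall>z\<in>?K. cball z r \<subseteq> ?L" using r ObL by blast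
  have LU: "?L \<subseteq> ?U" using Lc by auto
  have KU: "?K \<subseteq> ?U" using KOb Ob_def by auto
  have inj: "inj_on (\<lambda>z. (gx ac e n z, gy ac e n z)) ?K"
    using inj_on_subset[OF inj_gxy KU] by (simp add: gxy_eq[symmetric])
  have dnz: "\<forall>z\<in>?K. (deriv (gx ac e n) z, deriv (gy ac e n) z) \<noteq> (0,0)"
    using deriv_nz KU by blast
  obtain \<delta> where \<delta>: "\<delta> > 0" "\<forall>h. holo2_on h ?U \<and> (\<forall>z\<in>?L. norm ((gx ac e n z, gy ac e n z) - h z) < \<delta>) \<longrightarrow> embedding_on h ?K"
    using stability[of "gx ac e n" ?U "gy ac e n" ?K r ?L] hol_gxy open_Dm cK KU r(1) KL LU inj dnz
    by blast
  have "PP e n \<delta>"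
    unfolding PP_def
  proof (intro allI impI)
    fix h :: "complex \<Rightarrow> complex \<times> complex"
    assume h: "holo2_on h (dom_gam ac e n) \<and> (SUP z\<in>?L. ereal (norm (the (gam ac e n z) - h z))) < ereal \<delta>"
    have "norm ((gx ac e n z, gy ac e n z) - h z) < \<delta>" if z: "z \<in> ?L" for z
    proof -
      have "ereal (norm (the (gam ac e n z) - h z)) \<le> (SUP z\<in>?L. ereal (norm (the (gam ac e n z) - h z)))"
        by (rule SUP_upper[OF z])
      then have "ereal (norm (the (gam ac e n z) - h z)) < ereal \<delta>" using h by (meson order_le_less_trans)
      moreover have "the (gam ac e n z) = (gx ac e n z, gy ac e n z)" using z LU by (auto simp: gam_eq gxy_eq)
      ultimately show ?thesis by simp
    qed
    then show "embedding_on h (Kn ac e Rc (n - 1))"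
      using \<delta>(2) h nj by (simp add: dom_gam_eq)
  qed
  then show ?thesis using \<delta>(1) by blast
qed

definition eps_of :: "(nat \<Rightarrow> real) \<Rightarrow> nat \<Rightarrow> real" where
  "eps_of d k = d (k - 1) / 2 ^ (2 * k + 1)"

definition Pst :: "nat \<Rightarrow> (nat \<Rightarrow> real) \<Rightarrow> bool" where
  "Pst n d \<longleftrightarrow> d 0 = 1/4 \<and> (\<forall>k<n. 0 < d (Suc k) \<and> d (Suc k) < d k) \<and>
     (\<forall>k. 1 \<le> k \<and> k \<le> n \<longrightarrow> PP (eps_of d) k (d k))"

lemma Pst_bounds: "Pst n d \<Longrightarrow> k \<le> n \<Longrightarrow> 0 < d k \<and> d k \<le> 1/4"
proof (induction k)
  case 0 then show ?case by (simp add: Pst_def)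
next
  case (Suc k)
  then have kn: "k < n" by simp
  then have "0 < d (Suc k) \<and> d (Suc k) < d k" using Suc.prems(1) unfolding Pst_def by blast
  moreover have "d k \<le> 1/4" using Suc kn by simp
  ultimately show ?case by simp
qed

lemma Pst_step: assumes P: "Pst n d" shows "\<exists>d'. Pst (Suc n) d' \<and> (\<forall>k\<le>n. d' k = d k)"
proof -
  let ?e = "eps_of d"
  have e: "\<forall>k\<in>{1..Suc n}. 0 < ?e k \<and> ?e k \<le> 1"
  proof
    fix k assume k: "k \<in> {1..Suc n}"
    then have b: "0 < d (k - 1)" "d (k - 1) \<le> 1/4" using Pst_bounds[OF P, of "k - 1"] by auto
    have "(1::real) \<le> 2 ^ (2 * k + 1)" by (rule one_le_power) simp
    then have "d (k - 1) / 2 ^ (2 * k + 1) \<le> d (k - 1)" using b by (simp add: divide_le_eq mult_le_cancel_left1 less_imp_le)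
    then have "?e k \<le> 1" using b unfolding eps_of_def by linarith
    moreover have "0 < ?e k" using b unfolding eps_of_def by simp
    ultimately show "0 < ?e k \<and> ?e k \<le> 1" by simp
  qed
  obtain \<delta> where \<delta>: "\<delta> > 0" "PP ?e (Suc n) \<delta>" using stab_exists[OF _ e] by auto
  define d' where "d' = d(Suc n := min (d n / 2) \<delta>)"
  have agree: "\<forall>k\<in>{1..Suc n}. eps_of d' k = ?e k" by (auto simp: eps_of_def d'_def)
  have dn: "0 < d n" using Pst_bounds[OF P, of n] by auto
  have A: "d' 0 = 1/4" using P by (simp add: Pst_def d'_def)
  have B: "\<forall>k<Suc n. 0 < d' (Suc k) \<and> d' (Suc k) < d' k"
  proof (intro allI impI)
    fix k assume k: "k < Suc n"
    show "0 < d' (Suc k) \<and> d' (Suc k) < d' k"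
    proof (cases "k = n")
      case True then show ?thesis using dn \<delta> by (simp add: d'_def)
    next
      case False then show ?thesis using P k by (simp add: d'_def Pst_def)
    qed
  qed
  have C: "\<forall>k. 1 \<le> k \<and> k \<le> Suc n \<longrightarrow> PP (eps_of d') k (d' k)"
  proof (intro allI impI)
    fix k assume k: "1 \<le> k \<and> k \<le> Suc n"
    have "PP (eps_of d') k (d' k) = PP ?e k (d' k)"
      by (rule PP_cong) (use agree k in auto)
    moreover have "PP ?e k (d' k)"
    proof (cases "k = Suc n")
      case True then show ?thesis using \<delta> PP_mono by (simp add: d'_def)
    next
      case False then show ?thesis using P k by (simp add: d'_def Pst_def)
    qed
    ultimately show "PP (eps_of d') k (d' k)" by simp
  qed
  have "Pst (Suc n) d'" unfolding Pst_def using A B C by blast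
  then show ?thesis by (intro exI[of _ d']) (auto simp: d'_def)
qed

lemma term_bound:
  assumes n: "n \<ge> 1" and p: "norm (fst p) \<le> 2 * real n - 3/2" "norm (snd p) \<le> 2 * real n - 3/2"
    and e: "0 \<le> \<epsilon> n"
  shows "(case fmap ac \<epsilon> n p of None \<Rightarrow> (\<infinity> :: ereal) | Some q \<Rightarrow> ereal (norm (q - p))) \<le> ereal (2 * \<epsilon> n)"
proof -
  obtain x y where xy: "p = (x, y)" by (cases p)
  have an: "norm (ac n) = 2 * real n - 1" using norm_ac n by simp
  have far: "norm (u - ac n) \<ge> 1/2" if "norm u \<le> 2 * real n - 3/2" for u
    using that an norm_triangle_ineq2[of "ac n" u] by (simp add: norm_minus_commute)
  have fb: "norm (complex_of_real (\<epsilon> n) / (u - ac n)) \<le> 2 * \<epsilon> n" if "norm u \<le> 2 * real n - 3/2" for u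
  proof -
    have "norm (complex_of_real (\<epsilon> n) / (u - ac n)) = \<epsilon> n / norm (u - ac n)"
      using e by (simp add: norm_divide)
    also have "\<dots> \<le> \<epsilon> n / (1/2)" using far[OF that] e by (intro divide_left_mono) auto
    finally show ?thesis by simp
  qed
  have nz: "u \<noteq> ac n" if "norm u \<le> 2 * real n - 3/2" for u
    using far[OF that] by auto
  show ?thesis
  proof (cases "odd n")
    case True
    define c where "c = complex_of_real (\<epsilon> n) / (x - ac n)"
    have "fmap ac \<epsilon> n p = Some (x, y + c)"
      using True nz[of x] p xy by (simp add: fmap_def c_def)
    moreover have "(x, y + c) - p = (0, c)" using xy by simp
    moreover have "norm c \<le> 2 * \<epsilon> n" using fb[of x] p xy by (simp add: c_def)
    ultimately show ?thesis by (simp add: norm_Pair)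
  next
    case False
    define c where "c = complex_of_real (\<epsilon> n) / (y - ac n)"
    have "fmap ac \<epsilon> n p = Some (x + c, y)"
      using False nz[of y] p xy by (simp add: fmap_def c_def)
    moreover have "(x + c, y) - p = (c, 0)" using xy by simp
    moreover have "norm c \<le> 2 * \<epsilon> n" using fb[of y] p xy by (simp add: c_def)
    ultimately show ?thesis by (simp add: norm_Pair)
  qed
qed

theorem proposition3p3:
  shows "\<exists>(a :: nat \<Rightarrow> complex) (\<epsilon> :: nat \<Rightarrow> real) (R :: nat \<Rightarrow> real) (\<delta> :: nat \<Rightarrow> real).
    (\<forall>n\<ge>1. \<epsilon> n > 0 \<and> R n > 0) \<and> R 0 = 0 \<and>
    (\<forall>n\<ge>1. R (n - 1) < norm (a n) \<and> norm (a n) < R n) \<and>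
    (\<forall>n. \<delta> n > 0) \<and> (\<forall>n. \<delta> (Suc n) < \<delta> n) \<and> \<delta> 0 = 1/4 \<and>
    (\<forall>n\<ge>1.
       (\<forall>h :: complex \<Rightarrow> complex \<times> complex.
          holo2_on h (dom_gam a \<epsilon> n) \<and>
          (SUP z\<in>Kn a \<epsilon> R n. ereal (norm (the (gam a \<epsilon> n z) - h z))) < ereal (\<delta> n)
          \<longrightarrow> embedding_on h (Kn a \<epsilon> R (n - 1))) \<and>
       (\<forall>j<n. (SUP p\<in>closure (nbhd (Bn R j) (1/2)).
                 (case fmap a \<epsilon> n p of None \<Rightarrow> (\<infinity> :: ereal) | Some q \<Rightarrow> ereal (norm (q - p))))
              < ereal (\<delta> j / 2 ^ (j + n))))"
proof -
  have base: "Pst 0 (\<lambda>_. 1/4)" by (simp add: Pst_def)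
  obtain f where f: "\<forall>n. Pst n (f n) \<and> (\<forall>k\<le>n. f (Suc n) k = f n k)"
  proof -
    have "\<exists>x. Pst 0 x" using base by blast
    then show ?thesis using dependent_nat_choice[of Pst "\<lambda>n d d'. \<forall>k\<le>n. d' k = d k"] Pst_step that
      by blast
  qed
  have agree: "f m k = f n k" if "n \<le> m" "k \<le> n" for m n k
    using that(1)
  proof (induction m rule: dec_induct)
    case base then show ?case by simp
  next
    case (step m) then show ?case using f that(2) by auto
  qed
  define \<delta> where "\<delta> k = f k k" for k
  have f\<delta>: "f m k = \<delta> k" if "k \<le> m" for m k using agree[OF that order_refl] by (simp add: \<delta>_def)
  define \<epsilon> where "\<epsilon> = eps_of \<delta>"
  have \<delta>b: "0 < \<delta> k \<and> \<delta> k \<le> 1/4" for k using Pst_bounds[of k "f k" k] f by (simp add: \<delta>_def)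
  have \<delta>dec: "\<delta> (Suc k) < \<delta> k" for k
  proof -
    have "f (Suc k) (Suc k) < f (Suc k) k" using f[rule_format, of "Suc k"] unfolding Pst_def by blast
    then show ?thesis using f\<delta>[of k "Suc k"] by (simp add: \<delta>_def)
  qed
  have \<delta>0: "\<delta> 0 = 1/4" using f by (simp add: Pst_def \<delta>_def)
  have anti: "\<delta> m \<le> \<delta> j" if "j \<le> m" for j m
    using that
  proof (induction m rule: dec_induct)
    case base then show ?case by simp
  next
    case (step m) then show ?case using \<delta>dec[of m] by linarith
  qed
  have PPn: "PP \<epsilon> n (\<delta> n)" if n: "n \<ge> 1" for n
  proof -
    have "PP (eps_of (f n)) n (f n n)" using f n by (simp add: Pst_def)
    moreover have "PP (eps_of (f n)) n (f n n) = PP \<epsilon> n (f n n)"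
      by (rule PP_cong) (auto simp: eps_of_def \<epsilon>_def f\<delta>)
    ultimately show ?thesis by (simp add: \<delta>_def)
  qed
  have cond2: "(SUP p\<in>closure (nbhd (Bn Rc j) (1/2)).
                 (case fmap ac \<epsilon> n p of None \<Rightarrow> (\<infinity> :: ereal) | Some q \<Rightarrow> ereal (norm (q - p))))
              < ereal (\<delta> j / 2 ^ (j + n))" if n: "n \<ge> 1" and j: "j < n" for n j
  proof -
    let ?B = "Bn Rc j"
    have Bc: "closed ?B" by (simp add: Bn_def closed_Times)
    have B0: "?B \<noteq> {}"
    proof (cases "j = 0")
      case True then show ?thesis by (simp add: Bn_def)
    next
      case False
      then have "(0,0) \<in> ?B" by (simp add: Bn_def Dn_def Rc_def mem_Times_iff)
      then show ?thesis by blast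
    qed
    have Bb: "norm (fst b) \<le> Rc j \<and> norm (snd b) \<le> Rc j" if "b \<in> ?B" for b
    proof (cases "j = 0")
      case True then show ?thesis using that by (simp add: Bn_def Rc_def)
    next
      case False
      then have "Rc j > 0" by (simp add: Rc_def)
      then show ?thesis using that False by (auto simp: Bn_def Dn_def mem_Times_iff)
    qed
    have clS: "closure (nbhd ?B (1/2)) \<subseteq> {p. infdist p ?B \<le> 1/2}"
    proof (rule closure_minimal)
      show "nbhd ?B (1/2) \<subseteq> {p. infdist p ?B \<le> 1/2}" by (auto simp: nbhd_def)
      show "closed {p. infdist p ?B \<le> 1/2}"
        by (intro closed_Collect_le continuous_on_infdist continuous_on_id continuous_on_const)
    qed
    have en: "0 \<le> \<epsilon> n" using \<delta>b[of "n-1"] by (simp add: \<epsilon>_def eps_of_def)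
    have tb: "(case fmap ac \<epsilon> n p of None \<Rightarrow> (\<infinity> :: ereal) | Some q \<Rightarrow> ereal (norm (q - p))) \<le> ereal (2 * \<epsilon> n)"
      if p: "p \<in> closure (nbhd ?B (1/2))" for p
    proof -
      have "infdist p ?B \<le> 1/2" using p clS by auto
      moreover obtain b where b: "b \<in> ?B" "infdist p ?B = dist p b"
        using infdist_attains_inf[OF Bc B0] by blast
      ultimately have d: "dist p b \<le> 1/2" by simp
      have "norm (fst p - fst b) \<le> dist p b" "norm (snd p - snd b) \<le> dist p b"
        by (cases p, cases b, simp add: dist_norm norm_fst_le norm_snd_le)+
      moreover have "norm (fst p) \<le> norm (fst b) + norm (fst p - fst b)" "norm (snd p) \<le> norm (snd b) + norm (snd p - snd b)"
        by (metis add.commute diff_add_cancel norm_triangle_ineq)+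
      moreover have "Rc j + 1/2 \<le> 2 * real n - 3/2" using j by (simp add: Rc_def)
      ultimately have "norm (fst p) \<le> 2 * real n - 3/2" "norm (snd p) \<le> 2 * real n - 3/2"
        using Bb[OF b(1)] d by linarith+
      then show ?thesis using term_bound[where \<epsilon>=\<epsilon> and n=n and p=p, OF n _ _ en] by blast
    qed
    then have "(SUP p\<in>closure (nbhd ?B (1/2)).
                 (case fmap ac \<epsilon> n p of None \<Rightarrow> (\<infinity> :: ereal) | Some q \<Rightarrow> ereal (norm (q - p)))) \<le> ereal (2 * \<epsilon> n)"
      by (rule SUP_least)
    moreover have "2 * \<epsilon> n < \<delta> j / 2 ^ (j + n)"
    proof -
      have "2 * \<epsilon> n = \<delta> (n - 1) / 2 ^ (2 * n)" by (simp add: \<epsilon>_def eps_of_def)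
      also have "\<dots> \<le> \<delta> j / 2 ^ (2 * n)" using anti[of j "n - 1"] j by (intro divide_right_mono) auto
      also have "\<dots> < \<delta> j / 2 ^ (j + n)"
        using \<delta>b[of j] j by (intro divide_strict_left_mono power_strict_increasing) auto
      finally show ?thesis .
    qed
    then have "ereal (2 * \<epsilon> n) < ereal (\<delta> j / 2 ^ (j + n))" by simp
    ultimately show ?thesis by (rule order_le_less_trans)
  qed
  have c1: "\<forall>n\<ge>1. \<epsilon> n > 0 \<and> Rc n > 0"
    using \<delta>b by (auto simp: \<epsilon>_def eps_of_def Rc_def)
  have c2: "Rc 0 = 0" by (simp add: Rc_def)
  have c3: "\<forall>n\<ge>1. Rc (n - 1) < norm (ac n) \<and> norm (ac n) < Rc n"
    by (auto simp: Rc_def norm_ac of_nat_diff)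
  have c7: "\<forall>n\<ge>1.
       (\<forall>h :: complex \<Rightarrow> complex \<times> complex.
          holo2_on h (dom_gam ac \<epsilon> n) \<and>
          (SUP z\<in>Kn ac \<epsilon> Rc n. ereal (norm (the (gam ac \<epsilon> n z) - h z))) < ereal (\<delta> n)
          \<longrightarrow> embedding_on h (Kn ac \<epsilon> Rc (n - 1))) \<and>
       (\<forall>j<n. (SUP p\<in>closure (nbhd (Bn Rc j) (1/2)).
                 (case fmap ac \<epsilon> n p of None \<Rightarrow> (\<infinity> :: ereal) | Some q \<Rightarrow> ereal (norm (q - p))))
              < ereal (\<delta> j / 2 ^ (j + n)))"
    using PPn cond2 unfolding PP_def by blast
  have c4: "\<forall>n. \<delta> n > 0" using \<delta>b by blast
  show ?thesis
    apply (rule exI[of _ ac], rule exI[of _ \<epsilon>], rule exI[of _ Rc], rule exI[of _ \<delta>])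
    using c1 c2 c3 c4 \<delta>dec \<delta>0 c7 by blast
qed

end
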